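(* Let $n\geq 3$ be a multiple of $3$. Then $\gamma_{sR}(C_3\vee C_n)=1$.
   Context: $C_n$ denotes the cycle on $n$ vertices. For a graph $G=(V,E)$ and $x\in V$, $N_G[x]=\{x\}\cup\{y: xy\in E\}$. A signed Roman dominating function (SRDF) on $G$ is a function $f:V\to\{-1,1,2\}$ such that (a) $\sum_{y\in N_G[x]}f(y)\geq 1$ for every $x\in V$, and (b) every vertex $x$ with $f(x)=-1$ is adjacent to at least one vertex $y$ with $f(y)=2$. The weight of $f$ is $\sum_{x\in V}f(x)$, and $\gamma_{sR}(G)$ is the minimum weight of an SRDF on $G$. The join $G_1\vee G_2$ of two graphs has vertex set $V(G_1)\cup V(G_2)$ (disjoint union) and edge set $E(G_1)\cup E(G_2)\cup\{uv: u\in V(G_1), v\in V(G_2)\}$. *)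

theory Defs
  imports Main
begin

text \<open>A finite simple graph is represented by a vertex set V and a symmetric,
irreflexive adjacency relation E (only its restriction to V matters).\<close>

definition closed_nbhd :: "'a set \<Rightarrow> ('a \<Rightarrow> 'a \<Rightarrow> bool) \<Rightarrow> 'a \<Rightarrow> 'a set" where
  "closed_nbhd V E x = {x} \<union> {y \<in> V. E x y}"

definition is_SRDF :: "'a set \<Rightarrow> ('a \<Rightarrow> 'a \<Rightarrow> bool) \<Rightarrow> ('a \<Rightarrow> int) \<Rightarrow> bool" where
  "is_SRDF V E f \<longleftrightarrow>
     (\<forall>x\<in>V. f x \<in> {-1, 1, 2}) \<and>
     (\<forall>x\<in>V. (\<Sum>y\<in>closed_nbhd V E x. f y) \<ge> 1) \<and>
     (\<forall>x\<in>V. f x = -1 \<longrightarrow> (\<exists>y\<in>V. E x y \<and> f y = 2))"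

definition weight :: "'a set \<Rightarrow> ('a \<Rightarrow> int) \<Rightarrow> int" where
  "weight V f = (\<Sum>x\<in>V. f x)"

definition gamma_sR :: "'a set \<Rightarrow> ('a \<Rightarrow> 'a \<Rightarrow> bool) \<Rightarrow> int" where
  "gamma_sR V E = Min {weight V f | f. is_SRDF V E f}"

definition cycle_V :: "nat \<Rightarrow> nat set" where
  "cycle_V n = {0..<n}"

definition cycle_E :: "nat \<Rightarrow> nat \<Rightarrow> nat \<Rightarrow> bool" where
  "cycle_E n i j \<longleftrightarrow> i < n \<and> j < n \<and> (j = (i + 1) mod n \<or> i = (j + 1) mod n)"

definition join_V :: "'a set \<Rightarrow> 'b set \<Rightarrow> ('a + 'b) set" where
  "join_V V1 V2 = V1 <+> V2"

fun join_E :: "('a \<Rightarrow> 'a \<Rightarrow> bool) \<Rightarrow> ('b \<Rightarrow> 'b \<Rightarrow> bool) \<Rightarrow> ('a + 'b) \<Rightarrow> ('a + 'b) \<Rightarrow> bool" where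
  "join_E E1 E2 (Inl u) (Inl v) = E1 u v"
| "join_E E1 E2 (Inr u) (Inr v) = E2 u v"
| "join_E E1 E2 (Inl u) (Inr v) = True"
| "join_E E1 E2 (Inr u) (Inl v) = True"

end

theory Submission
  imports Defs
begin

definition gg :: "nat \<Rightarrow> int" where "gg i = (if i mod 3 = 0 then 2 else -1)"

lemma gg_sum: "(\<Sum>i<3*k. gg i) = 0"
proof (induction k)
  case 0 then show ?case by simp
next
  case (Suc k)
  have "{..<3*Suc k} = {..<3*k} \<union> {3*k, 3*k+1, 3*k+2}"
    by (rule set_eqI) (simp, arith)
  then have "(\<Sum>i<3*Suc k. gg i) = (\<Sum>i<3*k. gg i) + (gg (3*k) + gg (3*k+1) + gg (3*k+2))"
    by (simp add: sum.union_disjoint)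
  also have "gg (3*k) + gg (3*k+1) + gg (3*k+2) = 0"
  proof -
    have "(3*k) mod 3 = 0" "(3*k+1) mod 3 = 1" "(3*k+2) mod 3 = 2" by presburger+
    then show ?thesis by (simp add: gg_def)
  qed
  finally show ?case using Suc by simp
qed

lemma cyc_pred:
  fixes i j n :: nat
  assumes "i < n" "j < n" "n \<ge> 3"
  shows "(i = (j+1) mod n) \<longleftrightarrow> j = (i+n-1) mod n"
proof -
  have a: "(i+n-1) mod n = (if i = 0 then n-1 else i-1)"
  proof (cases "i = 0")
    case True then show ?thesis using assms by simp
  next
    case False
    have e: "i+n-1 = (i-1) + n" using False by simp
    have "(i+n-1) mod n = ((i-1) + n) mod n" by (subst e) (rule refl)
    also have "\<dots> = (i-1) mod n" by (rule mod_add_self2)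
    also have "\<dots> = i - 1" using assms by simp
    finally show ?thesis using False by simp
  qed
  have b: "(j+1) mod n = (if j = n-1 then 0 else j+1)"
    using assms by (cases "j = n-1") auto
  show ?thesis unfolding a b using assms by (cases "i = 0"; cases "j = n - 1") auto
qed

lemma tri: "a < 3 \<Longrightarrow> b < (3::nat) \<Longrightarrow> a \<noteq> b \<Longrightarrow> cycle_E 3 a b"
proof -
  assume "a < 3" "b < 3" "a \<noteq> b"
  then have "a = 0 \<or> a = 1 \<or> a = 2" "b = 0 \<or> b = 1 \<or> b = 2" by auto
  then show ?thesis using \<open>a \<noteq> b\<close> unfolding cycle_E_def by auto
qed

lemma nbInl:
  assumes "a < 3"
  shows "closed_nbhd (join_V (cycle_V 3) (cycle_V n)) (join_E (cycle_E 3) (cycle_E n)) (Inl a)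
       = join_V (cycle_V 3) (cycle_V n)"
proof
  show "closed_nbhd (join_V (cycle_V 3) (cycle_V n)) (join_E (cycle_E 3) (cycle_E n)) (Inl a)
       \<subseteq> join_V (cycle_V 3) (cycle_V n)"
    using assms by (auto simp: closed_nbhd_def join_V_def cycle_V_def)
next
  show "join_V (cycle_V 3) (cycle_V n) \<subseteq> closed_nbhd (join_V (cycle_V 3) (cycle_V n)) (join_E (cycle_E 3) (cycle_E n)) (Inl a)"
  proof
    fix y assume y: "y \<in> join_V (cycle_V 3) (cycle_V n)"
    show "y \<in> closed_nbhd (join_V (cycle_V 3) (cycle_V n)) (join_E (cycle_E 3) (cycle_E n)) (Inl a)"
    proof (cases y)
      case (Inl b)
      then have "b < 3" using y by (auto simp: join_V_def cycle_V_def)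
      then show ?thesis using Inl y tri[OF assms \<open>b < 3\<close>] by (auto simp: closed_nbhd_def)
    next
      case (Inr j)
      then show ?thesis using y by (auto simp: closed_nbhd_def)
    qed
  qed
qed

lemma res3: fixes i :: nat shows
  "(i mod 3 = 0 \<and> (i+1) mod 3 = 1 \<and> (i+2) mod 3 = 2) \<or> (i mod 3 = 1 \<and> (i+1) mod 3 = 2 \<and> (i+2) mod 3 = 0)
   \<or> (i mod 3 = 2 \<and> (i+1) mod 3 = 0 \<and> (i+2) mod 3 = 1)"
proof -
  have r: "i mod 3 < 3" by simp
  have a: "(i+1) mod 3 = (i mod 3 + 1) mod 3" "(i+2) mod 3 = (i mod 3 + 2) mod 3"
    by (metis mod_add_left_eq)+
  have "i mod 3 = 0 \<or> i mod 3 = 1 \<or> i mod 3 = 2" using r by linarith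
  then show ?thesis unfolding a by auto
qed

theorem mainTheorem4:
  fixes n :: nat
  assumes "n \<ge> 3" and "3 dvd n"
  shows "gamma_sR (join_V (cycle_V 3) (cycle_V n)) (join_E (cycle_E 3) (cycle_E n)) = 1"
proof -
  define V where "V = join_V (cycle_V 3) (cycle_V n)"
  define E where "E = join_E (cycle_E 3) (cycle_E n)"
  have V: "V = Inl ` {0..<3} \<union> Inr ` {0..<n}"
    unfolding V_def join_V_def cycle_V_def Plus_def by auto
  have finV: "finite V" using V by simp
  have nb0: "closed_nbhd V E (Inl 0) = V"
    unfolding V_def E_def by (rule nbInl) simp
  have lower: "weight V f \<ge> 1" if "is_SRDF V E f" for f
  proof -
    have "Inl 0 \<in> V" using V by auto
    then have "(\<Sum>y\<in>closed_nbhd V E (Inl 0). f y) \<ge> 1" using that unfolding is_SRDF_def by blast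
    then show ?thesis using nb0 unfolding weight_def by simp
  qed
  have upper: "weight V f \<le> 2 * int (card V)" if "is_SRDF V E f" for f
  proof -
    have "(\<Sum>x\<in>V. f x) \<le> (\<Sum>x\<in>V. 2)"
      by (rule sum_mono) (use that in \<open>auto simp: is_SRDF_def\<close>)
    then show ?thesis unfolding weight_def by simp
  qed
  define f :: "nat + nat \<Rightarrow> int" where
    "f = (\<lambda>x. case x of Inl a \<Rightarrow> (if a = 0 then -1 else 1) | Inr i \<Rightarrow> gg i)"
  obtain k where k: "n = 3 * k" using assms(2) by blast
  have wInl: "(\<Sum>x\<in>Inl ` {0..<3}. f x) = 1"
    by (simp add: sum.reindex f_def numeral_3_eq_3)
  have wInr: "(\<Sum>x\<in>Inr ` {0..<n}. f x) = 0"
    using gg_sum[of k] k by (simp add: sum.reindex f_def lessThan_atLeast0)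
  have wf: "weight V f = 1"
    unfolding weight_def V using wInl wInr
    by (subst sum.union_disjoint) auto
  have m3: "(x mod n) mod 3 = x mod 3" for x
    using assms(2) by (simp add: mod_mod_cancel)
  have srdf: "is_SRDF V E f"
    unfolding is_SRDF_def
  proof (intro conjI ballI impI)
    fix x assume "x \<in> V"
    then show "f x \<in> {-1,1,2}" by (auto simp: f_def gg_def split: sum.splits)
  next
    fix x assume xV: "x \<in> V"
    show "(\<Sum>y\<in>closed_nbhd V E x. f y) \<ge> 1"
    proof (cases x)
      case (Inl a)
      then have "a < 3" using xV V by auto
      then have "closed_nbhd V E x = V"
        unfolding Inl V_def E_def by (rule nbInl)
      then show ?thesis using wf unfolding weight_def by simp
    next
      case (Inr i)
      then have i: "i < n" using xV V by auto
      define p where "p = (i+n-1) mod n"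
      define q where "q = (i+1) mod n"
      have pn: "p < n" "q < n" using assms(1) by (auto simp: p_def q_def)
      have nbi: "closed_nbhd V E x = Inl ` {0..<3} \<union> {Inr p, Inr i, Inr q}"
      proof (rule set_eqI)
        fix y
        show "y \<in> closed_nbhd V E x \<longleftrightarrow> y \<in> Inl ` {0..<3} \<union> {Inr p, Inr i, Inr q}"
        proof (cases y)
          case (Inl b)
          have "Inl b \<in> closed_nbhd V E (Inr i) \<longleftrightarrow> Inl b \<in> Inl ` {0..<3} \<union> {Inr p, Inr i, Inr q}"
            by (simp add: closed_nbhd_def V E_def image_iff)
          then show ?thesis using Inl \<open>x = Inr i\<close> by simp
        next
          case (Inr j)
          have cp: "j < n \<Longrightarrow> (i = (j+1) mod n) \<longleftrightarrow> j = p"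
            using cyc_pred[OF i _ assms(1), of j] unfolding p_def by blast
          have "j < n \<and> cycle_E n i j \<longleftrightarrow> j = p \<or> j = q"
            using cp i pn unfolding cycle_E_def q_def[symmetric] by blast
          then have "Inr j \<in> closed_nbhd V E (Inr i) \<longleftrightarrow> Inr j \<in> Inl ` {0..<3} \<union> {Inr p, Inr i, Inr q}"
            using i by (auto simp add: closed_nbhd_def V E_def image_iff)
          then show ?thesis using Inr \<open>x = Inr i\<close> by simp
        qed
      qed
      have pm: "p mod 3 = (i+2) mod 3"
      proof -
        have "p mod 3 = (i+n-1) mod 3" using m3 p_def by simp
        also have "(i+n-1) = (i+2) + 3*(k-1)" using k assms(1) by auto
        also have "((i+2) + 3*(k-1)) mod 3 = (i+2) mod 3" by (metis mod_mult_self2 mult.commute)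
        finally show ?thesis .
      qed
      have qm: "q mod 3 = (i+1) mod 3" using m3 q_def by simp
      have dist: "p \<noteq> i" "q \<noteq> i" "p \<noteq> q" "gg p + gg i + gg q = 0"
        using res3[of i] pm qm unfolding gg_def by auto
      note s3 = dist(4)
      have "(\<Sum>y\<in>closed_nbhd V E x. f y) = (\<Sum>y\<in>Inl ` {0..<3}. f y) + (\<Sum>y\<in>{Inr p, Inr i, Inr q}. f y)"
        unfolding nbi by (subst sum.union_disjoint) auto
      also have "(\<Sum>y\<in>{Inr p, Inr i, Inr q}. f y) = f (Inr p) + f (Inr i) + f (Inr q)"
        using dist by simp
      also have "f (Inr p) + f (Inr i) + f (Inr q) = gg p + gg i + gg q" by (simp add: f_def)
      also note wInl
      also note s3
      finally show ?thesis by simp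
    qed
  next
    fix x assume xV: "x \<in> V" and fx: "f x = -1"
    show "\<exists>y\<in>V. E x y \<and> f y = 2"
    proof (cases x)
      case (Inl a)
      have "Inr 0 \<in> V" using V assms(1) by auto
      moreover have "f (Inr 0) = 2" by (simp add: f_def gg_def)
      ultimately show ?thesis using Inl E_def by (auto intro!: bexI[of _ "Inr 0"])
    next
      case (Inr i)
      then have i: "i < n" using xV V by auto
      have ni: "i mod 3 \<noteq> 0" using fx Inr by (auto simp: f_def gg_def split: if_splits)
      show ?thesis
      proof (cases "i mod 3 = 1")
        case True
        then have i1: "i \<ge> 1" by (cases i) auto
        have "(i - 1) mod 3 = 0" using True i1 by presburger
        moreover have "Inr (i-1) \<in> V" using V i by auto
        moreover have "cycle_E n i (i-1)"
        proof -
          have "i - 1 + 1 = i" using i1 by simp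
          then have "i = ((i-1)+1) mod n" using i by simp
          then show ?thesis using i unfolding cycle_E_def by simp
        qed
        ultimately show ?thesis using Inr by (intro bexI[of _ "Inr (i-1)"]) (simp_all add: E_def f_def gg_def)
      next
        case False
        then have "(i+1) mod 3 = 0" using ni by presburger
        then have "((i+1) mod n) mod 3 = 0" using m3[of "i+1"] by simp
        moreover have "Inr ((i+1) mod n) \<in> V" using V i by auto
        moreover have "cycle_E n i ((i+1) mod n)" using i unfolding cycle_E_def by simp
        ultimately show ?thesis using Inr
          by (intro bexI[of _ "Inr ((i+1) mod n)"]) (simp_all add: E_def f_def gg_def)
      qed
    qed
  qed
  let ?W = "{weight V f | f. is_SRDF V E f}"
  have "?W \<subseteq> {1..2 * int (card V)}" using lower upper by auto
  then have finW: "finite ?W" using finite_subset by blast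
  have "Min ?W = 1"
    by (rule Min_eqI) (use finW lower srdf wf in auto)
  then show ?thesis unfolding gamma_sR_def V_def E_def by simp
qed

end
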